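(* Let the $\mathbb{C}^*$-action on $\mathbb{P}^n$ be given by $\lambda\cdot[z_0:\dots:z_n]=[\lambda^{a_0}z_0:\dots:\lambda^{a_n}z_n]$ with integers $a_0\leq a_1\leq\dots\leq a_n$, not all equal. Let $X\subset\mathbb{P}^n$ be a smooth connected projective variety invariant under this action (with the induced action), and suppose $X^{\mathbb{C}^*}$ is finite. Let $F_1,\dots,F_r$ be the connected components of $(\mathbb{P}^n)^{\mathbb{C}^*}$, where $F_1$ is the component linearly spanned by the coordinate points $p_0,\dots,p_k$ (so $a_0=\dots=a_k<a_{k+1}$ and $\dim F_1=k$). Then $\#(X\cap F_1)\leq \dim F_1+1$.
   Context: $p_i\in\mathbb{P}^n$ denotes the coordinate point with $1$ in position $i$ and $0$ elsewhere. $(\mathbb{P}^n)^{\mathbb{C}^*}$ and $X^{\mathbb{C}^*}$ denote the sets of points fixed by every $\lambda\in\mathbb{C}^*$; the connected components of $(\mathbb{P}^n)^{\mathbb{C}^*}$ are the linear subspaces spanned by coordinate points with equal weight $a_i$. *)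

theory Defs
  imports Complex_Main
begin

text \<open>Projective space P^n is modelled through affine cones: a point of C^(n+1) is a function
  z :: nat => complex with z i = 0 for i > n; a subset of P^n is represented by the set of
  nonzero vectors lying over it.  Polynomials in z_0..z_n are finitely supported coefficient
  functions on exponent vectors (nat => nat), with exponents vanishing beyond n.\<close>

type_synonym cvec = "nat \<Rightarrow> complex"
type_synonym cpoly = "(nat \<Rightarrow> nat) \<Rightarrow> complex"

definition in_coords :: "nat \<Rightarrow> cvec \<Rightarrow> bool" where
  "in_coords n z \<longleftrightarrow> (\<forall>i>n. z i = 0)"

definition is_poly :: "nat \<Rightarrow> cpoly \<Rightarrow> bool" where
  "is_poly n p \<longleftrightarrow> finite {m. p m \<noteq> 0} \<and> (\<forall>m. p m \<noteq> 0 \<longrightarrow> (\<forall>i>n. m i = 0))"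

definition peval :: "nat \<Rightarrow> cpoly \<Rightarrow> cvec \<Rightarrow> complex" where
  "peval n p z = (\<Sum>m\<in>{m. p m \<noteq> 0}. p m * (\<Prod>i\<le>n. z i ^ m i))"

definition homog :: "nat \<Rightarrow> nat \<Rightarrow> cpoly \<Rightarrow> bool" where
  "homog n d p \<longleftrightarrow> (\<forall>m. p m \<noteq> 0 \<longrightarrow> (\<Sum>i\<le>n. m i) = d)"

definition pderiv_var :: "nat \<Rightarrow> cpoly \<Rightarrow> cpoly" where
  "pderiv_var j p = (\<lambda>m. of_nat (Suc (m j)) * p (m(j := Suc (m j))))"

definition Vproj :: "nat \<Rightarrow> cpoly set \<Rightarrow> cvec set" where
  "Vproj n S = {z. in_coords n z \<and> (\<exists>i. z i \<noteq> 0) \<and> (\<forall>p\<in>S. peval n p z = 0)}"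

definition proj_alg :: "nat \<Rightarrow> cvec set \<Rightarrow> bool" where
  "proj_alg n X \<longleftrightarrow> (\<exists>S. (\<forall>p\<in>S. is_poly n p \<and> (\<exists>d. homog n d p)) \<and> X = Vproj n S)"

definition proj_irreducible :: "nat \<Rightarrow> cvec set \<Rightarrow> bool" where
  "proj_irreducible n X \<longleftrightarrow> proj_alg n X \<and> X \<noteq> {} \<and>
     (\<forall>Y Z. proj_alg n Y \<and> proj_alg n Z \<and> X = Y \<union> Z \<longrightarrow> X = Y \<or> X = Z)"

definition proj_connected :: "nat \<Rightarrow> cvec set \<Rightarrow> bool" where
  "proj_connected n X \<longleftrightarrow> proj_alg n X \<and> X \<noteq> {} \<and>
     (\<forall>Y Z. proj_alg n Y \<and> proj_alg n Z \<and> X = Y \<union> Z \<and> Y \<inter> Z = {} \<longrightarrow> Y = {} \<or> Z = {})"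

definition proj_dim :: "nat \<Rightarrow> cvec set \<Rightarrow> nat" where
  "proj_dim n X = Sup {d. \<exists>ch. (\<forall>i\<le>d. proj_irreducible n (ch i)) \<and>
                               (\<forall>i<d. ch i \<subset> ch (Suc i)) \<and> ch d = X}"

definition vanish_ideal :: "nat \<Rightarrow> cvec set \<Rightarrow> cpoly set" where
  "vanish_ideal n X = {p. is_poly n p \<and> (\<forall>z\<in>X. peval n p z = 0)}"

definition tangent_space :: "nat \<Rightarrow> cvec set \<Rightarrow> cvec \<Rightarrow> cvec set" where
  "tangent_space n X z = {v. in_coords n v \<and>
     (\<forall>p\<in>vanish_ideal n X. (\<Sum>j\<le>n. peval n (pderiv_var j p) z * v j) = 0)}"

definition lin_indep :: "cvec set \<Rightarrow> bool" where
  "lin_indep B \<longleftrightarrow> (\<forall>c. (\<forall>i. (\<Sum>v\<in>B. c v * v i) = 0) \<longrightarrow> (\<forall>v\<in>B. c v = 0))"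

definition cdim :: "cvec set \<Rightarrow> nat" where
  "cdim V = Sup {card B | B. finite B \<and> B \<subseteq> V \<and> lin_indep B}"

text \<open>Smoothness (Jacobian criterion): at every point, the tangent space of the cone has
  dimension dim X + 1.\<close>
definition proj_smooth :: "nat \<Rightarrow> cvec set \<Rightarrow> bool" where
  "proj_smooth n X \<longleftrightarrow> (\<forall>z\<in>X. cdim (tangent_space n X z) = proj_dim n X + 1)"

definition cscale :: "complex \<Rightarrow> cvec \<Rightarrow> cvec" where
  "cscale c z = (\<lambda>i. c * z i)"

definition ppoint :: "cvec \<Rightarrow> cvec set" where
  "ppoint z = {cscale c z | c. c \<noteq> 0}"

definition act :: "(nat \<Rightarrow> int) \<Rightarrow> complex \<Rightarrow> cvec \<Rightarrow> cvec" where
  "act a l z = (\<lambda>i. l powi a i * z i)"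

definition invariant :: "(nat \<Rightarrow> int) \<Rightarrow> cvec set \<Rightarrow> bool" where
  "invariant a X \<longleftrightarrow> (\<forall>z\<in>X. \<forall>l. l \<noteq> 0 \<longrightarrow> act a l z \<in> X)"

definition fixed_pts :: "(nat \<Rightarrow> int) \<Rightarrow> cvec set \<Rightarrow> cvec set" where
  "fixed_pts a X = {z\<in>X. \<forall>l. l \<noteq> 0 \<longrightarrow> ppoint (act a l z) = ppoint z}"

end

theory Submission imports Defs begin

definition mnm :: "nat \<Rightarrow> (nat \<Rightarrow> nat) \<Rightarrow> cvec \<Rightarrow> complex" where
  "mnm n m z = (\<Prod>i\<le>n. z i ^ m i)"

lemma peval_sup:
  assumes "finite T" "{m. p m \<noteq> 0} \<subseteq> T"
  shows "peval n p z = (\<Sum>m\<in>T. p m * mnm n m z)"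
  unfolding peval_def mnm_def
  by (rule sum.mono_neutral_left) (use assms in auto)

definition madd :: "(nat \<Rightarrow> nat) \<times> (nat \<Rightarrow> nat) \<Rightarrow> (nat \<Rightarrow> nat)" where
  "madd x = (\<lambda>i. fst x i + snd x i)"

definition pmul :: "cpoly \<Rightarrow> cpoly \<Rightarrow> cpoly" where
  "pmul p q = (\<lambda>m. \<Sum>x\<in>{x\<in>{m. p m\<noteq>0}\<times>{m. q m\<noteq>0}. madd x = m}. p (fst x) * q (snd x))"

lemma mnm_madd: "mnm n (madd x) z = mnm n (fst x) z * mnm n (snd x) z"
  unfolding mnm_def madd_def by (simp add: power_add prod.distrib)

lemma pmul_supp:
  assumes "is_poly n p" "is_poly n q"
  shows "{m. pmul p q m \<noteq> 0} \<subseteq> madd ` ({m. p m\<noteq>0}\<times>{m. q m\<noteq>0})"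
proof
  fix m assume "m \<in> {m. pmul p q m \<noteq> 0}"
  have "{x\<in>{m. p m\<noteq>0}\<times>{m. q m\<noteq>0}. madd x = m} \<noteq> {}"
  proof (rule ccontr)
    assume "\<not> {x\<in>{m. p m\<noteq>0}\<times>{m. q m\<noteq>0}. madd x = m} \<noteq> {}"
    then have e: "{x\<in>{m. p m\<noteq>0}\<times>{m. q m\<noteq>0}. madd x = m} = {}" by (simp only: not_not)
    have "pmul p q m = 0" unfolding pmul_def e by (rule sum.empty)
    then show False using \<open>m \<in> {m. pmul p q m \<noteq> 0}\<close> by simp
  qed
  then show "m \<in> madd ` ({m. p m\<noteq>0}\<times>{m. q m\<noteq>0})" by blast
qed

lemma peval_pmul:
  assumes "is_poly n p" "is_poly n q"
  shows "peval n (pmul p q) z = peval n p z * peval n q z"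
proof -
  let ?P = "{m. p m\<noteq>0}" and ?Q = "{m. q m\<noteq>0}"
  have fP: "finite ?P" and fQ: "finite ?Q" using assms unfolding is_poly_def by auto
  let ?T = "madd ` (?P \<times> ?Q)"
  have fT: "finite ?T" using fP fQ by auto
  have "peval n (pmul p q) z = (\<Sum>m\<in>?T. pmul p q m * mnm n m z)"
    by (rule peval_sup[OF fT pmul_supp[OF assms]])
  also have "\<dots> = (\<Sum>m\<in>?T. \<Sum>x\<in>{x. x \<in> ?P \<times> ?Q \<and> madd x = m}. p (fst x) * q (snd x) * mnm n (madd x) z)"
    unfolding pmul_def sum_distrib_right by (intro sum.cong refl) auto
  also have "\<dots> = (\<Sum>x\<in>?P \<times> ?Q. p (fst x) * q (snd x) * mnm n (madd x) z)"
    by (rule sum.group) (use fP fQ in auto)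
  also have "\<dots> = (\<Sum>x\<in>?P \<times> ?Q. (p (fst x) * mnm n (fst x) z) * (q (snd x) * mnm n (snd x) z))"
    by (simp add: mnm_madd mult_ac)
  also have "\<dots> = (\<Sum>m\<in>?P. p m * mnm n m z) * (\<Sum>m\<in>?Q. q m * mnm n m z)"
    unfolding sum_product sum.cartesian_product by (rule sum.cong) auto
  also have "\<dots> = peval n p z * peval n q z"
    using peval_sup[OF fP, of p n z] peval_sup[OF fQ, of q n z] by simp
  finally show ?thesis .
qed

lemma pmul_is_poly:
  assumes "is_poly n p" "is_poly n q"
  shows "is_poly n (pmul p q)"
proof -
  have fP: "finite {m. p m\<noteq>0}" and fQ: "finite {m. q m\<noteq>0}" using assms unfolding is_poly_def by auto
  show ?thesis unfolding is_poly_def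
  proof safe
    show "finite {m. pmul p q m \<noteq> 0}"
      using pmul_supp[OF assms] fP fQ by (meson finite_SigmaI finite_imageI finite_subset)
  next
    fix m i assume "pmul p q m \<noteq> 0" "n < i"
    then obtain x where "x \<in> {m. p m\<noteq>0}\<times>{m. q m\<noteq>0}" "m = madd x"
      using pmul_supp[OF assms] by blast
    then show "m i = 0" using assms \<open>n < i\<close> unfolding is_poly_def madd_def by auto
  qed
qed

lemma pmul_homog:
  assumes "is_poly n p" "is_poly n q" "homog n d p" "homog n e q"
  shows "homog n (d+e) (pmul p q)"
  unfolding homog_def
proof safe
  fix m assume "pmul p q m \<noteq> 0"
  then obtain x where "x \<in> {m. p m\<noteq>0}\<times>{m. q m\<noteq>0}" "m = madd x"
    using pmul_supp[OF assms(1,2)] by blast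
  then show "(\<Sum>i\<le>n. m i) = d + e" using assms(3,4) unfolding homog_def madd_def
    by (auto simp: sum.distrib)
qed

lemma alg_union:
  assumes "proj_alg n Y" "proj_alg n Z"
  shows "proj_alg n (Y \<union> Z)"
proof -
  obtain S1 where S1: "\<forall>p\<in>S1. is_poly n p \<and> (\<exists>d. homog n d p)" "Y = Vproj n S1"
    using assms(1) unfolding proj_alg_def by blast
  obtain S2 where S2: "\<forall>p\<in>S2. is_poly n p \<and> (\<exists>d. homog n d p)" "Z = Vproj n S2"
    using assms(2) unfolding proj_alg_def by blast
  let ?S = "{pmul p q | p q. p \<in> S1 \<and> q \<in> S2}"
  have "\<forall>r\<in>?S. is_poly n r \<and> (\<exists>d. homog n d r)"
    using S1(1) S2(1) pmul_is_poly pmul_homog by blast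
  moreover have "Y \<union> Z = Vproj n ?S"
  proof
    show "Y \<union> Z \<subseteq> Vproj n ?S"
      using S1 S2 by (auto simp: Vproj_def peval_pmul)
    show "Vproj n ?S \<subseteq> Y \<union> Z"
    proof
      fix z assume z: "z \<in> Vproj n ?S"
      show "z \<in> Y \<union> Z"
      proof (cases "z \<in> Y")
        case False
        then obtain p where p: "p \<in> S1" "peval n p z \<noteq> 0" using z S1(2) by (auto simp: Vproj_def)
        have "\<forall>q\<in>S2. peval n q z = 0"
        proof
          fix q assume "q \<in> S2"
          then have "peval n (pmul p q) z = 0" using z p by (auto simp: Vproj_def)
          then show "peval n q z = 0" using p S1(1) S2(1) \<open>q\<in>S2\<close> by (simp add: peval_pmul)
        qed
        then show ?thesis using z S2(2) by (auto simp: Vproj_def)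
      qed simp
    qed
  qed
  ultimately show ?thesis unfolding proj_alg_def by blast
qed


definition dl :: "nat \<Rightarrow> nat \<Rightarrow> nat" where "dl i = (\<lambda>l. if l = i then 1 else 0)"

definition lin :: "nat \<Rightarrow> cvec \<Rightarrow> cpoly" where
  "lin n c = (\<lambda>m. \<Sum>i\<le>n. if m = dl i then c i else 0)"

lemma dl_inj: "dl i = dl j \<longleftrightarrow> i = j"
  unfolding dl_def by (metis one_neq_zero)

lemma lin_supp: "{m. lin n c m \<noteq> 0} \<subseteq> dl ` {..n}"
proof
  fix m assume "m \<in> {m. lin n c m \<noteq> 0}"
  then have "(\<Sum>i\<le>n. if m = dl i then c i else 0) \<noteq> 0" unfolding lin_def by simp
  then obtain i where "i \<in> {..n}" "(if m = dl i then c i else 0) \<noteq> 0"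
    using sum.not_neutral_contains_not_neutral by blast
  then have "i \<le> n" "m = dl i" by (auto split: if_splits)
  then show "m \<in> dl ` {..n}" by blast
qed

lemma lin_dl: "i \<le> n \<Longrightarrow> lin n c (dl i) = c i"
  unfolding lin_def dl_inj by (simp add: sum.delta)

lemma mnm_dl: "i \<le> n \<Longrightarrow> mnm n (dl i) z = z i"
  unfolding mnm_def dl_def
  by (simp add: power_0 prod.delta[simplified] if_distrib cong: if_cong)

lemma peval_lin: "peval n (lin n c) z = (\<Sum>i\<le>n. c i * z i)"
proof -
  have "peval n (lin n c) z = (\<Sum>m\<in>dl ` {..n}. lin n c m * mnm n m z)"
    by (rule peval_sup[OF _ lin_supp]) simp
  also have "\<dots> = (\<Sum>i\<le>n. lin n c (dl i) * mnm n (dl i) z)"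
    by (rule sum.reindex_cong[where l=dl]) (auto simp: inj_on_def dl_inj)
  also have "\<dots> = (\<Sum>i\<le>n. c i * z i)" by (simp add: lin_dl mnm_dl)
  finally show ?thesis .
qed

lemma lin_is_poly: "is_poly n (lin n c)"
  unfolding is_poly_def
proof safe
  show "finite {m. lin n c m \<noteq> 0}" using lin_supp finite_subset by blast
  fix m i assume "lin n c m \<noteq> 0" "n < i"
  then obtain j where "j \<le> n" "m = dl j" using lin_supp by blast
  then show "m i = 0" using \<open>n<i\<close> by (simp add: dl_def)
qed

lemma lin_homog: "homog n 1 (lin n c)"
  unfolding homog_def
proof safe
  fix m assume "lin n c m \<noteq> 0"
  then obtain j where "j \<le> n" "m = dl j" using lin_supp by blast
  then show "(\<Sum>i\<le>n. m i) = 1" by (simp add: dl_def sum.delta)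
qed

lemma alg_lin:
  assumes "proj_alg n X"
  shows "proj_alg n (X \<inter> {z. \<forall>c\<in>C. (\<Sum>i\<le>n. c i * z i) = 0})"
proof -
  obtain S where S: "\<forall>p\<in>S. is_poly n p \<and> (\<exists>d. homog n d p)" "X = Vproj n S"
    using assms unfolding proj_alg_def by blast
  let ?S = "S \<union> lin n ` C"
  have P: "\<forall>p\<in>?S. is_poly n p \<and> (\<exists>d. homog n d p)" using S(1) lin_is_poly lin_homog by blast
  have L: "(\<forall>p\<in>lin n ` C. peval n p z = 0) \<longleftrightarrow> (\<forall>c\<in>C. (\<Sum>i\<le>n. c i * z i) = 0)" for z
    by (simp add: peval_lin)
  have I: "z \<in> X \<inter> {z. \<forall>c\<in>C. (\<Sum>i\<le>n. c i * z i) = 0} \<longleftrightarrow> z \<in> Vproj n ?S" for z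
    unfolding S(2) Vproj_def mem_Collect_eq Int_iff ball_Un L[symmetric] by blast
  have E: "X \<inter> {z. \<forall>c\<in>C. (\<Sum>i\<le>n. c i * z i) = 0} = Vproj n ?S"
    using I by blast
  show ?thesis unfolding proj_alg_def using P E by blast
qed

lemma alg_Union:
  assumes "finite W" "\<forall>w\<in>W. proj_alg n (C w)" "proj_alg n C0"
  shows "proj_alg n (C0 \<union> \<Union>(C ` W))"
  using assms
proof (induction W rule: finite_induct)
  case (insert w W)
  have a1: "proj_alg n (C w)" using insert.prems by simp
  have a2: "proj_alg n (C0 \<union> \<Union>(C ` W))" using insert.IH insert.prems by simp
  have "proj_alg n (C w \<union> (C0 \<union> \<Union>(C ` W)))" by (rule alg_union[OF a1 a2])
  moreover have "C0 \<union> \<Union>(C ` insert w W) = C w \<union> (C0 \<union> \<Union>(C ` W))" by auto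
  ultimately show ?case by simp
qed simp

lemma irred_cover:
  assumes "finite W" "proj_irreducible n X" "\<forall>w\<in>W. proj_alg n (C w)" "proj_alg n C0"
    "X = C0 \<union> \<Union>(C ` W)"
  shows "X = C0 \<or> (\<exists>w\<in>W. X = C w)"
  using assms
proof (induction W arbitrary: C0 rule: finite_induct)
  case (insert w W)
  have R: "proj_alg n (C0 \<union> \<Union>(C ` W))"
    by (rule alg_Union) (use insert.hyps(1) insert.prems(2,3) in simp_all)
  have "C0 \<union> \<Union>(C ` insert w W) = C w \<union> (C0 \<union> \<Union>(C ` W))" by blast
  then have "X = C w \<union> (C0 \<union> \<Union>(C ` W))" using insert.prems(4) by simp
  moreover have irr: "\<forall>Y Z. proj_alg n Y \<and> proj_alg n Z \<and> X = Y \<union> Z \<longrightarrow> X = Y \<or> X = Z"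
    using insert.prems(1) unfolding proj_irreducible_def by (elim conjE)
  moreover have "proj_alg n (C w)" using insert.prems(2) by simp
  ultimately have "proj_alg n (C w) \<and> proj_alg n (C0 \<union> \<Union>(C ` W)) \<and> X = C w \<union> (C0 \<union> \<Union>(C ` W))"
    using R by simp
  then have "X = C w \<or> X = C0 \<union> \<Union>(C ` W)" by (rule irr[rule_format])
  then show ?case
  proof
    assume "X = C w" then show ?thesis by blast
  next
    assume h: "X = C0 \<union> \<Union>(C ` W)"
    have W2: "\<forall>w\<in>W. proj_alg n (C w)" using insert.prems(2) by simp
    have "X = C0 \<or> (\<exists>w\<in>W. X = C w)"
      by (rule insert.IH[OF insert.prems(1) W2 insert.prems(3) h])
    then show ?thesis by blast
  qed
qed simp


lemma prod_powi:
  assumes "(l::complex) \<noteq> 0" "finite A"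
  shows "(\<Prod>i\<in>A. l powi f i) = l powi (\<Sum>i\<in>A. f i)"
  using assms(2)
proof (induction A rule: finite_induct)
  case (insert x A)
  have "(\<Prod>i\<in>insert x A. l powi f i) = l powi f x * (\<Prod>i\<in>A. l powi f i)"
    using insert.hyps by (rule prod.insert)
  also have "\<dots> = l powi f x * l powi (\<Sum>i\<in>A. f i)" using insert.IH by simp
  also have "\<dots> = l powi (f x + (\<Sum>i\<in>A. f i))" using assms(1) by (intro power_int_add[symmetric]) simp
  also have "\<dots> = l powi (\<Sum>i\<in>insert x A. f i)" using insert.hyps by simp
  finally show ?case .
qed simp

lemma mnm_act: "l \<noteq> 0 \<Longrightarrow> mnm n m (act a l z) = l powi (\<Sum>i\<le>n. a i * int (m i)) * mnm n m z"
proof -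
  assume l: "l \<noteq> 0"
  have "mnm n m (act a l z) = (\<Prod>i\<le>n. (l powi a i) ^ m i) * mnm n m z"
    unfolding mnm_def act_def by (simp add: power_mult_distrib prod.distrib)
  also have "(\<Prod>i\<le>n. (l powi a i) ^ m i) = (\<Prod>i\<le>n. l powi (a i * int (m i)))"
    by (simp add: power_int_mult)
  also have "\<dots> = l powi (\<Sum>i\<le>n. a i * int (m i))" using l by (simp add: prod_powi)
  finally show ?thesis .
qed

lemma limit_pt:
  assumes mono_a: "\<forall>i j. i \<le> j \<and> j \<le> n \<longrightarrow> a i \<le> a j"
    and gap: "\<forall>i. k < i \<and> i \<le> n \<longrightarrow> a 0 < a i" and eq: "\<forall>i\<le>k. a i = a 0"
    and p: "is_poly n p" "homog n d p"
    and vanish: "\<forall>l. l \<noteq> 0 \<longrightarrow> peval n p (act a l z) = 0"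
  shows "peval n p (\<lambda>i. if i \<le> k then z i else 0) = 0"
proof -
  let ?P = "{m. p m \<noteq> 0}"
  have fP: "finite ?P" using p unfolding is_poly_def by auto
  define e where "e m = (\<Sum>i\<le>n. (a i - a 0) * int (m i))" for m :: "nat \<Rightarrow> nat"
  have ge: "\<And>i. i \<le> n \<Longrightarrow> a 0 \<le> a i" using mono_a by auto
  have e_nn: "\<And>i m. i \<le> n \<Longrightarrow> 0 \<le> (a i - a 0) * int (m i)" using ge by simp
  have wt: "(\<Sum>i\<le>n. a i * int (m i)) = int d * a 0 + e m" if "m \<in> ?P" for m
  proof -
    have "(\<Sum>i\<le>n. m i) = d" using p(2) that unfolding homog_def by auto
    then have s: "(\<Sum>i\<le>n. int (m i)) = int d" by (metis of_nat_sum)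
    have "(\<Sum>i\<le>n. a i * int (m i)) = (\<Sum>i\<le>n. a 0 * int (m i) + (a i - a 0) * int (m i))"
      by (intro sum.cong refl) (simp add: algebra_simps)
    also have "\<dots> = (\<Sum>i\<le>n. a 0 * int (m i)) + e m" unfolding e_def by (rule sum.distrib)
    also have "(\<Sum>i\<le>n. a 0 * int (m i)) = a 0 * (\<Sum>i\<le>n. int (m i))" by (rule sum_distrib_left[symmetric])
    finally show ?thesis using s by (simp add: mult.commute)
  qed
  have e0: "0 \<le> e m" for m unfolding e_def by (intro sum_nonneg) (use e_nn in auto)
  define g where "g l = (\<Sum>m\<in>?P. p m * mnm n m z * l ^ nat (e m))" for l :: complex
  have gz: "g l = 0" if "l \<noteq> 0" for l
  proof -
    have "0 = peval n p (act a l z)" using vanish that by simp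
    also have "\<dots> = (\<Sum>m\<in>?P. p m * mnm n m (act a l z))" by (rule peval_sup[OF fP]) simp
    also have "\<dots> = (\<Sum>m\<in>?P. l powi (int d * a 0) * (p m * mnm n m z * l ^ nat (e m)))"
    proof (intro sum.cong refl)
      fix m assume m: "m \<in> ?P"
      have "l powi (int d * a 0 + e m) = l powi (int d * a 0) * l ^ nat (e m)"
      proof -
        have "e m = int (nat (e m))" using e0[of m] by simp
        then have "l powi e m = l ^ nat (e m)" by (metis power_int_of_nat)
        moreover have "l powi (int d * a 0 + e m) = l powi (int d * a 0) * l powi e m"
          using that by (rule power_int_add[OF disjI1])
        ultimately show ?thesis by simp
      qed
      then show "p m * mnm n m (act a l z) = l powi (int d * a 0) * (p m * mnm n m z * l ^ nat (e m))"
        using mnm_act[OF that] wt[OF m] by simp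
    qed
    also have "\<dots> = l powi (int d * a 0) * g l" unfolding g_def by (simp add: sum_distrib_left)
    finally show ?thesis using that by simp
  qed
  have "isCont g 0" unfolding g_def by (intro continuous_intros)
  then have "(g \<longlongrightarrow> g 0) (at 0)" by (simp add: isCont_def)
  moreover have "(g \<longlongrightarrow> 0) (at 0)"
    by (rule tendsto_eventually) (auto simp: eventually_at_filter gz)
  ultimately have g0: "g 0 = 0" by (rule tendsto_unique[OF at_neq_bot])
  have "peval n p (\<lambda>i. if i \<le> k then z i else 0) = (\<Sum>m\<in>?P. p m * mnm n m (\<lambda>i. if i \<le> k then z i else 0))"
    by (rule peval_sup[OF fP]) simp
  also have "\<dots> = g 0" unfolding g_def
  proof (intro sum.cong refl)
    fix m assume m: "m \<in> ?P"
    show "p m * mnm n m (\<lambda>i. if i \<le> k then z i else 0) = p m * mnm n m z * 0 ^ nat (e m)"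
    proof (cases "e m = 0")
      case True
      then have "\<forall>i\<in>{..n}. (a i - a 0) * int (m i) = 0"
      proof -
        have "(\<Sum>i\<le>n. (a i - a 0) * int (m i)) = 0" using True unfolding e_def .
        moreover have "\<forall>i\<in>{..n}. 0 \<le> (a i - a 0) * int (m i)" using e_nn by simp
        ultimately show ?thesis using sum_nonneg_eq_0_iff[of "{..n}" "\<lambda>i. (a i - a 0) * int (m i)"] by simp
      qed
      then have mi: "m i = 0" if "k < i" "i \<le> n" for i
      proof -
        have "(a i - a 0) * int (m i) = 0" using \<open>\<forall>i\<in>{..n}. _\<close> that by simp
        moreover have "a i - a 0 \<noteq> 0" using gap that by force
        ultimately show ?thesis by simp
      qed
      have "mnm n m (\<lambda>i. if i \<le> k then z i else 0) = mnm n m z"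
        unfolding mnm_def
      proof (intro prod.cong refl)
        fix i assume i: "i \<in> {..n}"
        show "(if i \<le> k then z i else 0) ^ m i = z i ^ m i"
        proof (cases "i \<le> k")
          case False
          then have "m i = 0" using mi i by simp
          then show ?thesis by simp
        qed simp
      qed
      then show ?thesis using True by simp
    next
      case False
      then have "(\<Sum>i\<le>n. (a i - a 0) * int (m i)) \<noteq> 0" unfolding e_def by simp
      then obtain i where i: "i \<in> {..n}" "(a i - a 0) * int (m i) \<noteq> 0"
        using sum.not_neutral_contains_not_neutral by blast
      have ki: "\<not> i \<le> k"
      proof
        assume "i \<le> k" then have "a i = a 0" using eq by blast
        then show False using i(2) by simp
      qed
      have mi0: "m i \<noteq> 0" using i(2) by auto
      have "mnm n m (\<lambda>i. if i \<le> k then z i else 0) = 0"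
        unfolding mnm_def
      proof (rule prod_zero)
        show "\<exists>j\<in>{..n}. (if j \<le> k then z j else 0) ^ m j = 0"
          using i(1) ki mi0 by (intro bexI[of _ i]) simp_all
      qed simp
      moreover have "nat (e m) \<noteq> 0" using False e0[of m] by simp
      ultimately show ?thesis by simp
    qed
  qed
  finally show ?thesis using g0 by simp
qed


lemma ppoint_scale: "c \<noteq> 0 \<Longrightarrow> ppoint (cscale c z) = ppoint z"
  unfolding ppoint_def cscale_def
proof (auto, goal_cases)
  case (1 d) then show ?case by (rule_tac x="d*c" in exI) (simp add: mult_ac)
next
  case (2 d) then show ?case by (rule_tac x="d/c" in exI) auto
qed

lemma in_ppoint: "z \<in> ppoint z"
  unfolding ppoint_def cscale_def by (rule CollectI, rule exI[of _ 1]) simp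

lemma sum_dm: "(i::nat) \<le> n \<Longrightarrow> (\<Sum>l\<le>n. (if l = i then u else 0) * (z l::complex)) = u * z i"
proof -
  assume i: "i \<le> n"
  have "(\<Sum>l\<le>n. (if l = i then u else 0) * z l) = (\<Sum>l\<le>n. if l = i then u * z l else 0)"
    by (intro sum.cong refl) simp
  also have "\<dots> = u * z i" using i by (simp add: sum.delta)
  finally show ?thesis .
qed

lemma sum_two: "(i::nat) \<le> n \<Longrightarrow> j \<le> n \<Longrightarrow>
  (\<Sum>l\<le>n. ((if l = i then u else 0) - (if l = j then v else 0)) * (z l::complex)) = u * z i - v * z j"
proof -
  assume i: "i \<le> n" and j: "j \<le> n"
  have "(\<Sum>l\<le>n. ((if l = i then u else 0) - (if l = j then v else 0)) * z l)
      = (\<Sum>l\<le>n. (if l = i then u else 0) * z l - (if l = j then v else 0) * z l)"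
    by (intro sum.cong refl) (simp add: left_diff_distrib)
  also have "\<dots> = (\<Sum>l\<le>n. (if l = i then u else 0) * z l) - (\<Sum>l\<le>n. (if l = j then v else 0) * z l)"
    by (rule sum_subtractf)
  also have "\<dots> = u * z i - v * z j" using sum_dm[OF i] sum_dm[OF j] by simp
  finally show ?thesis .
qed

lemma sum_one: "(i::nat) \<le> n \<Longrightarrow> (\<Sum>l\<le>n. (if l = i then 1 else 0) * (z l::complex)) = z i"
  using sum_dm[of i n 1 z] by simp

lemma same_pt:
  assumes "u \<in> Vproj n S" "w \<in> Vproj n S" "\<forall>i>k. u i = 0" "\<forall>i>k. w i = 0"
    "\<forall>i\<le>k. \<forall>j\<le>k. u i * w j = u j * w i"
  shows "ppoint u = ppoint w"
proof -
  obtain j where j: "w j \<noteq> 0" using assms(2) by (auto simp: Vproj_def)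
  then have jk: "j \<le> k" using assms(4) by (meson not_le)
  define c where "c = u j / w j"
  have "u = cscale c w"
  proof
    fix i show "u i = cscale c w i"
    proof (cases "i \<le> k")
      case True
      then have "u i * w j = u j * w i" using assms(5) jk by blast
      then show ?thesis using j unfolding cscale_def c_def by (simp add: field_simps)
    qed (use assms(3,4) in \<open>auto simp: cscale_def\<close>)
  qed
  moreover have "c \<noteq> 0"
  proof
    assume "c = 0"
    then have "\<forall>i. u i = 0" using \<open>u = cscale c w\<close> by (metis cscale_def mult_zero_left)
    then show False using assms(1) by (auto simp: Vproj_def)
  qed
  ultimately show ?thesis by (simp add: ppoint_scale)
qed

theorem proposition4:
  fixes n k :: nat and a :: "nat \<Rightarrow> int" and X :: "cvec set"
  assumes mono: "\<forall>i j. i \<le> j \<and> j \<le> n \<longrightarrow> a i \<le> a j"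
    and not_all_eq: "\<exists>i j. i \<le> n \<and> j \<le> n \<and> a i \<noteq> a j"
    and X_var: "proj_irreducible n X"
    and X_conn: "proj_connected n X"
    and X_smooth: "proj_smooth n X"
    and X_inv: "invariant a X"
    and X_fix_fin: "finite (ppoint ` fixed_pts a X)"
    and k_lt: "k < n"
    and F1_eq: "\<forall>i\<le>k. a i = a 0"
    and F1_gap: "a 0 < a (Suc k)"
  shows "card (ppoint ` (X \<inter> {z. \<forall>i>k. z i = 0})) \<le> k + 1"
proof -
  define F where "F = {z::cvec. \<forall>i>k. z i = 0}"
  define A where "A = ppoint ` (X \<inter> F)"
  obtain S where S: "\<forall>p\<in>S. is_poly n p \<and> (\<exists>d. homog n d p)" "X = Vproj n S"
    using X_var unfolding proj_irreducible_def proj_alg_def by blast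
  have gap: "\<forall>i. k < i \<and> i \<le> n \<longrightarrow> a 0 < a i"
  proof safe
    fix i assume "k < i" "i \<le> n"
    then have "a (Suc k) \<le> a i" using mono by auto
    then show "a 0 < a i" using F1_gap by simp
  qed
  have proj_pt: "(\<lambda>i. if i \<le> k then z i else 0) \<in> X \<inter> F"
    if z: "z \<in> X" "\<exists>i\<le>k. z i \<noteq> 0" for z
  proof -
    have "\<forall>p\<in>S. peval n p (\<lambda>i. if i \<le> k then z i else 0) = 0"
    proof
      fix p assume pS: "p \<in> S"
      then obtain d where pd: "is_poly n p" "homog n d p" using S(1) by blast
      have "\<forall>l. l \<noteq> 0 \<longrightarrow> peval n p (act a l z) = 0"
        using X_inv z(1) pS S(2) unfolding invariant_def Vproj_def by blast
      then show "peval n p (\<lambda>i. if i \<le> k then z i else 0) = 0"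
        using limit_pt[OF mono gap F1_eq pd] by blast
    qed
    moreover have "in_coords n (\<lambda>i. if i \<le> k then z i else 0)"
      using k_lt by (auto simp: in_coords_def)
    moreover have "\<exists>i. (if i \<le> k then z i else 0) \<noteq> 0" using z(2) by auto
    ultimately show ?thesis using S(2) by (auto simp: Vproj_def F_def)
  qed
  have "X \<inter> F \<subseteq> fixed_pts a X"
  proof
    fix z assume z: "z \<in> X \<inter> F"
    have "act a l z = cscale (l powi a 0) z" for l
      unfolding act_def cscale_def
    proof
      fix i show "l powi a i * z i = l powi a 0 * z i"
      proof (cases "i \<le> k")
        case True then have "a i = a 0" using F1_eq by blast
        then show ?thesis by simp
      next
        case False then have "z i = 0" using z unfolding F_def by simp
        then show ?thesis by simp
      qed
    qed
    then show "z \<in> fixed_pts a X" using z by (auto simp: fixed_pts_def ppoint_scale)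
  qed
  then have finA: "finite A" unfolding A_def using X_fix_fin
    by (meson finite_subset image_mono)
  obtain W where W: "W \<subseteq> X \<inter> F" "finite W" "A = ppoint ` W"
    using finite_subset_image[OF finA, of ppoint "X \<inter> F"] unfolding A_def by blast
  define C where "C w = X \<inter> {z. \<forall>c\<in>{\<lambda>l. (if l = i then w j else 0) - (if l = j then w i else 0) | i j. i \<le> k \<and> j \<le> k}. (\<Sum>l\<le>n. c l * z l) = 0}" for w
  define C0 where "C0 = X \<inter> {z. \<forall>c\<in>{\<lambda>l. if l = i then 1 else 0 | i. i \<le> k}. (\<Sum>l\<le>n. c l * z l) = 0}"
  have Xalg: "proj_alg n X" using X_var unfolding proj_irreducible_def by blast
  have C_eq: "C w = {z\<in>X. \<forall>i\<le>k. \<forall>j\<le>k. z i * w j = z j * w i}" for w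
  proof (intro set_eqI iffI)
    fix z assume "z \<in> C w"
    then have zX: "z \<in> X" and h: "\<forall>c\<in>{\<lambda>l. (if l = i then w j else 0) - (if l = j then w i else 0) | i j. i \<le> k \<and> j \<le> k}. (\<Sum>l\<le>n. c l * z l) = 0"
      unfolding C_def by auto
    have "z i * w j = z j * w i" if "i \<le> k" "j \<le> k" for i j
    proof -
      have "(\<Sum>l\<le>n. ((if l = i then w j else 0) - (if l = j then w i else 0)) * z l) = 0"
      proof (rule h[rule_format])
        show "(\<lambda>l. (if l = i then w j else 0) - (if l = j then w i else 0)) \<in> {\<lambda>l. (if l = i then w j else 0) - (if l = j then w i else 0) | i j. i \<le> k \<and> j \<le> k}"
          using that by blast
      qed
      moreover have "(\<Sum>l\<le>n. ((if l = i then w j else 0) - (if l = j then w i else 0)) * z l) = w j * z i - w i * z j"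
        using that k_lt by (intro sum_two) simp_all
      ultimately show ?thesis by (simp add: mult.commute)
    qed
    then show "z \<in> {z\<in>X. \<forall>i\<le>k. \<forall>j\<le>k. z i * w j = z j * w i}" using zX by blast
  next
    fix z assume "z \<in> {z\<in>X. \<forall>i\<le>k. \<forall>j\<le>k. z i * w j = z j * w i}"
    then have zX: "z \<in> X" and h: "\<forall>i\<le>k. \<forall>j\<le>k. z i * w j = z j * w i" by auto
    have "(\<Sum>l\<le>n. c l * z l) = 0" if cC: "c \<in> {\<lambda>l. (if l = i then w j else 0) - (if l = j then w i else 0) | i j. i \<le> k \<and> j \<le> k}" for c
    proof -
      obtain i j where c: "c = (\<lambda>l. (if l = i then w j else 0) - (if l = j then w i else 0))" "i \<le> k" "j \<le> k"
        using cC by blast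
      have "(\<Sum>l\<le>n. c l * z l) = w j * z i - w i * z j"
        unfolding c(1) using c k_lt by (intro sum_two) simp_all
      also have "\<dots> = 0" using h c(2,3) by (simp add: mult.commute)
      finally show ?thesis .
    qed
    then show "z \<in> C w" unfolding C_def using zX by blast
  qed
  have C0_eq: "C0 = {z\<in>X. \<forall>i\<le>k. z i = 0}"
    unfolding C0_def using k_lt by (auto simp: sum_one)
  have cover: "X = C0 \<union> \<Union>(C ` W)"
  proof
    show "C0 \<union> \<Union>(C ` W) \<subseteq> X" unfolding C_eq C0_eq by auto
    show "X \<subseteq> C0 \<union> \<Union>(C ` W)"
    proof
      fix z assume z: "z \<in> X"
      show "z \<in> C0 \<union> \<Union>(C ` W)"
      proof (cases "\<exists>i\<le>k. z i \<noteq> 0")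
        case True
        let ?pz = "\<lambda>i. if i \<le> k then z i else 0"
        have "ppoint ?pz \<in> A" unfolding A_def using proj_pt[OF z True] by blast
        then obtain w where w: "w \<in> W" "ppoint ?pz = ppoint w" using W(3) by auto
        then have "w \<in> ppoint ?pz" using in_ppoint by metis
        then obtain c where "w = cscale c ?pz" unfolding ppoint_def by blast
        then have "\<forall>i\<le>k. \<forall>j\<le>k. z i * w j = z j * w i" by (simp add: cscale_def)
        then show ?thesis using w(1) z unfolding C_eq by blast
      qed (use z in \<open>auto simp: C0_eq\<close>)
    qed
  qed
  have "X = C0 \<or> (\<exists>w\<in>W. X = C w)"
  proof (rule irred_cover[OF W(2) X_var _ _ cover])
    show "\<forall>w\<in>W. proj_alg n (C w)" unfolding C_def using alg_lin[OF Xalg] by blast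
    show "proj_alg n C0" unfolding C0_def using alg_lin[OF Xalg] by blast
  qed
  have all_eq: "\<forall>P\<in>A. \<forall>Q\<in>A. P = Q"
  proof (intro ballI)
    fix P Q assume "P \<in> A" "Q \<in> A"
    then obtain w1 w2 where w: "w1 \<in> X \<inter> F" "w2 \<in> X \<inter> F" "P = ppoint w1" "Q = ppoint w2"
      unfolding A_def by blast
    show "P = Q" using \<open>X = C0 \<or> (\<exists>w\<in>W. X = C w)\<close>
    proof
      assume "X = C0"
      then have "\<forall>i\<le>k. w1 i = 0" using w(1) C0_eq by auto
      then have "\<forall>i. w1 i = 0" using w(1) by (auto simp: F_def) (meson not_le)
      then show ?thesis using w(1) S(2) by (auto simp: Vproj_def)
    next
      assume "\<exists>w\<in>W. X = C w"
      then obtain w where ww: "w \<in> W" "X = C w" by blast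
      have wX: "w \<in> X \<inter> F" using ww W(1) by blast
      have "ppoint w1 = ppoint w" "ppoint w2 = ppoint w"
        using same_pt[of w1 n S w k] same_pt[of w2 n S w k] w wX ww(2) S(2)
        unfolding C_eq F_def by auto
      then show ?thesis using w by simp
    qed
  qed
  have "card A \<le> 1" using all_eq finA by (simp add: card_le_Suc0_iff_eq)
  then show ?thesis unfolding A_def F_def by simp
qed

end
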